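(* Let $X$ and $Y$ be Banach spaces with $d_K(X,Y)<\sigma<\frac16$. Then there is a norm-preserving bijection $\Omega:X\to Y$ such that for all $x_1,\dots,x_n\in X$, $$\Big|\big\|\textstyle\sum_{i=1}^n\Omega(x_i)\big\|_Y-\big\|\sum_{i=1}^n x_i\big\|_X\Big|\le 14\sigma\sum_{i=1}^n\|x_i\|_X.$$
   Context: The Kadets distance $d_K(X,Y)$ is the infimum, over all Banach spaces $Z$ and linear isometric embeddings $U:X\to Z$, $V:Y\to Z$, of the Hausdorff distance in $Z$ between $UB_X$ and $VB_Y$, where $B_X,B_Y$ are the closed unit balls. *)

theory Defs
  imports "HOL-Analysis.Analysis"
begin

text \<open>Such seminorms are exactly the functions
(x,y) \<mapsto> norm (U x + V y) for isometric embeddings U, V of X and Y into a common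
normed space Z (take Z = the quotient of X \<times> Y by the kernel, or its completion).\<close>
definition compatible_seminorm :: "('a::real_normed_vector \<times> 'b::real_normed_vector \<Rightarrow> real) \<Rightarrow> bool" where
  "compatible_seminorm N \<longleftrightarrow>
     (\<forall>z. 0 \<le> N z) \<and>
     (\<forall>z w. N (z + w) \<le> N z + N w) \<and>
     (\<forall>c z. N (c *\<^sub>R z) = \<bar>c\<bar> * N z) \<and>
     (\<forall>x. N (x, 0) = norm x) \<and>
     (\<forall>y. N (0, y) = norm y)"

definition ball_hausdorff :: "('a::real_normed_vector \<times> 'b::real_normed_vector \<Rightarrow> real) \<Rightarrow> real" where
  "ball_hausdorff N =
     max (SUP x\<in>cball (0::'a) 1. INF y\<in>cball (0::'b) 1. N (x, - y))
         (SUP y\<in>cball (0::'b) 1. INF x\<in>cball (0::'a) 1. N (x, - y))"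

definition kadets_dist :: "'a::real_normed_vector itself \<Rightarrow> 'b::real_normed_vector itself \<Rightarrow> real" where
  "kadets_dist _ _ = Inf {ball_hausdorff N | N :: 'a \<times> 'b \<Rightarrow> real. compatible_seminorm N}"

end

theory Submission
  imports Defs
begin

lemma csb_strong:
  fixes f :: "'a \<Rightarrow> 'b" and g :: "'b \<Rightarrow> 'a"
  assumes inj1: "inj_on f A" and sub1: "f ` A \<subseteq> B"
    and inj2: "inj_on g B" and sub2: "g ` B \<subseteq> A"
  shows "\<exists>h. bij_betw h A B \<and> (\<forall>a\<in>A. h a = f a \<or> (h a \<in> B \<and> g (h a) = a))"
proof -
  define X where "X = lfp (\<lambda>X. A - (g ` (B - (f ` X))))"
  define g' where "g' = the_inv_into (B - (f ` X)) g"
  let ?h = "\<lambda>z. if z \<in> X then f z else g' z"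
  have X: "X = A - (g ` (B - (f ` X)))"
    unfolding X_def by (rule lfp_unfold) (blast intro: monoI)
  then have X_compl: "A - X = g ` (B - (f ` X))"
    using sub2 by blast
  from inj2 have inj2': "inj_on g (B - (f ` X))"
    by (rule inj_on_subset) auto
  with X_compl have *: "g' ` (A - X) = B - (f ` X)"
    by (simp add: g'_def)
  have g'inv: "g (g' a) = a" if "a \<in> A - X" for a
    using X_compl that inj2' unfolding g'_def by (metis f_the_inv_into_f)
  have bij: "bij_betw ?h A B"
  proof (rule bij_betw_imageI)
  from X have X_sub: "X \<subseteq> A" by auto
  from X sub1 have fX_sub: "f ` X \<subseteq> B" by auto
  show "?h ` A = B"
  proof -
    from X_sub have "?h ` A = ?h ` (X \<union> (A - X))" by auto
    also have "\<dots> = ?h ` X \<union> ?h ` (A - X)" by (simp only: image_Un)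
    also have "?h ` X = f ` X" by auto
    also from * have "?h ` (A - X) = B - (f ` X)" by auto
    also from fX_sub have "f ` X \<union> (B - f ` X) = B" by blast
    finally show ?thesis .
  qed
  show "inj_on ?h A"
  proof -
    from inj1 X_sub have on_X: "inj_on f X"
      by (rule inj_on_subset)
    have on_X_compl: "inj_on g' (A - X)"
      unfolding g'_def X_compl
      by (rule inj_on_the_inv_into) (rule inj2')
    have impossible: False if eq: "f a = g' b" and a: "a \<in> X" and b: "b \<in> A - X" for a b
    proof -
      from a have fa: "f a \<in> f ` X" by (rule imageI)
      from b have "g' b \<in> g' ` (A - X)" by (rule imageI)
      with * have "g' b \<in> - (f ` X)" by simp
      with eq fa show False by simp
    qed
    show ?thesis
    proof (rule inj_onI)
      fix a b
      assume h: "?h a = ?h b"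
      assume "a \<in> A" and "b \<in> A"
      then consider "a \<in> X" "b \<in> X" | "a \<in> A - X" "b \<in> A - X"
        | "a \<in> X" "b \<in> A - X" | "a \<in> A - X" "b \<in> X"
        by blast
      then show "a = b"
      proof cases
        case 1
        with h on_X show ?thesis by (simp add: inj_on_eq_iff)
      next
        case 2
        with h on_X_compl show ?thesis by (simp add: inj_on_eq_iff)
      next
        case 3
        with h impossible [of a b] have False by simp
        then show ?thesis ..
      next
        case 4
        with h impossible [of b a] have False by simp
        then show ?thesis ..
      qed
    qed
  qed
  qed
  moreover have "\<forall>a\<in>A. ?h a = f a \<or> (?h a \<in> B \<and> g (?h a) = a)"
  proof
    fix a assume a: "a \<in> A"
    show "?h a = f a \<or> (?h a \<in> B \<and> g (?h a) = a)"
    proof (cases "a \<in> X")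
      case False
      then have "g' a \<in> B" using * a by blast
      then show ?thesis using False g'inv a by auto
    qed simp
  qed
  ultimately show ?thesis by blast
qed

lemma maximal_sep:
  assumes sym: "\<And>a b. R a b \<Longrightarrow> R b a"
  shows "\<exists>E\<subseteq>S. (\<forall>a\<in>E. \<forall>b\<in>E. a \<noteq> b \<longrightarrow> R a b) \<and> (\<forall>s\<in>S. \<exists>a\<in>E. s = a \<or> \<not> R s a)"
proof -
  define P where "P E \<longleftrightarrow> E \<subseteq> S \<and> (\<forall>a\<in>E. \<forall>b\<in>E. a \<noteq> b \<longrightarrow> R a b)" for E
  define \<A> where "\<A> = Collect P"
  have "\<forall>C\<in>chains \<A>. \<Union>C \<in> \<A>"
  proof
    fix C assume C: "C \<in> chains \<A>"
    have CA: "C \<subseteq> \<A>" and ch: "\<And>X Y. X \<in> C \<Longrightarrow> Y \<in> C \<Longrightarrow> X \<subseteq> Y \<or> Y \<subseteq> X"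
      using C unfolding chains_def chain_subset_def by blast+
    have PC: "\<And>X. X \<in> C \<Longrightarrow> P X" using CA unfolding \<A>_def by blast
    have "P (\<Union>C)"
      unfolding P_def
    proof (intro conjI ballI impI)
      show "\<Union>C \<subseteq> S" using PC unfolding P_def by blast
    next
      fix a b assume a: "a \<in> \<Union>C" and b: "b \<in> \<Union>C" and ab: "a \<noteq> b"
      obtain A where A: "A \<in> C" "a \<in> A" using a by blast
      obtain B where B: "B \<in> C" "b \<in> B" using b by blast
      show "R a b"
      proof (cases "A \<subseteq> B")
        case True
        then have "a \<in> B" using A by blast
        then show ?thesis using PC[OF B(1)] B(2) ab unfolding P_def by blast
      next
        case False
        then have "B \<subseteq> A" using ch[OF A(1) B(1)] by blast
        then have "b \<in> A" using B by blast
        then show ?thesis using PC[OF A(1)] A(2) ab unfolding P_def by blast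
      qed
    qed
    then show "\<Union>C \<in> \<A>" unfolding \<A>_def by simp
  qed
  then obtain M where M: "M \<in> \<A>" "\<And>X. X \<in> \<A> \<Longrightarrow> M \<subseteq> X \<Longrightarrow> X = M"
    using Zorn_Lemma[of \<A>] by blast
  have PM: "P M" using M(1) unfolding \<A>_def by simp
  have "\<forall>s\<in>S. \<exists>a\<in>M. s = a \<or> \<not> R s a"
  proof (rule ccontr)
    assume "\<not> (\<forall>s\<in>S. \<exists>a\<in>M. s = a \<or> \<not> R s a)"
    then obtain s where s: "s \<in> S" "\<And>a. a \<in> M \<Longrightarrow> s \<noteq> a \<and> R s a" by blast
    have "P (insert s M)"
      unfolding P_def
    proof (intro conjI ballI impI)
      show "insert s M \<subseteq> S" using PM s(1) unfolding P_def by blast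
    next
      fix a b assume a: "a \<in> insert s M" and b: "b \<in> insert s M" and ab: "a \<noteq> b"
      show "R a b"
      proof (cases "a = s")
        case True
        then have "b \<in> M" using b ab by blast
        then show ?thesis using s(2) True by blast
      next
        case False
        then have aM: "a \<in> M" using a by blast
        show ?thesis
        proof (cases "b = s")
          case True then show ?thesis using s(2)[OF aM] sym by blast
        next
          case False
          then have "b \<in> M" using b by blast
          then show ?thesis using PM aM ab unfolding P_def by blast
        qed
      qed
    qed
    then have "insert s M = M" using M(2)[of "insert s M"] unfolding \<A>_def by blast
    then show False using s by blast
  qed
  moreover have "M \<subseteq> S" "\<forall>a\<in>M. \<forall>b\<in>M. a \<noteq> b \<longrightarrow> R a b" using PM unfolding P_def by auto
  ultimately show ?thesis by (intro exI[of _ M] conjI)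
qed

lemma csN:
  assumes "compatible_seminorm N"
  shows "N z \<ge> 0" "N (z + w) \<le> N z + N w" "N (c *\<^sub>R z) = \<bar>c\<bar> * N z"
    "N (x, 0) = norm x" "N (0, y) = norm y"
  using assms unfolding compatible_seminorm_def by blast+

lemma N_uminus:
  assumes "compatible_seminorm N" shows "N (- z) = N z"
  using csN(3)[OF assms, of "-1" z] by simp

lemma N_neg_swap:
  assumes "compatible_seminorm N" shows "N (- x, y) = N (x, - y)"
  using N_uminus[OF assms, of "(x, - y)"] by simp

lemma N_tri2:
  assumes "compatible_seminorm N" shows "N (x, y) \<le> N (x, y') + norm (y - y')"
proof -
  have "(x, y) = (x, y') + (0, y - y')" by simp
  then have "N (x, y) = N ((x, y') + (0, y - y'))" by metis
  also have "\<dots> \<le> N (x, y') + N (0, y - y')" by (rule csN(2)[OF assms])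
  finally show ?thesis using csN(5)[OF assms] by simp
qed

lemma N_tri1:
  assumes "compatible_seminorm N" shows "N (x, y) \<le> N (x', y) + norm (x - x')"
proof -
  have "(x, y) = (x', y) + (x - x', 0)" by simp
  then have "N (x, y) = N ((x', y) + (x - x', 0))" by metis
  also have "\<dots> \<le> N (x', y) + N (x - x', 0)" by (rule csN(2)[OF assms])
  finally show ?thesis using csN(4)[OF assms] by simp
qed

lemma N_sum_list:
  assumes "compatible_seminorm N" shows "N (sum_list zs) \<le> sum_list (map N zs)"
proof (induction zs)
  case Nil
  then show ?case using csN(4)[OF assms, of 0] by (simp add: zero_prod_def)
next
  case (Cons a zs)
  then show ?case using csN(2)[OF assms, of a "sum_list zs"] by simp
qed

definition AP :: "('a::real_normed_vector \<times> 'b::real_normed_vector \<Rightarrow> real) \<Rightarrow> real \<Rightarrow> bool" where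
  "AP N c \<longleftrightarrow> (\<forall>x::'a. norm x = 1 \<longrightarrow> (\<exists>y::'b. norm y = 1 \<and> N (x, - y) \<le> c)) \<and>
              (\<forall>y::'b. norm y = 1 \<longrightarrow> (\<exists>x::'a. norm x = 1 \<and> N (x, - y) \<le> c))"

definition swapN :: "('a \<times> 'b \<Rightarrow> real) \<Rightarrow> ('b \<times> 'a \<Rightarrow> real)" where
  "swapN N = (\<lambda>(y, x). N (x, y))"

lemma swapN_cs:
  assumes "compatible_seminorm N" shows "compatible_seminorm (swapN N)"
  using assms unfolding compatible_seminorm_def swapN_def by (auto simp: scaleR_prod_def)

lemma swapN_AP:
  assumes "compatible_seminorm N" "AP N c" shows "AP (swapN N) c"
  using assms(2) N_neg_swap[OF assms(1)] unfolding AP_def swapN_def by auto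

lemma AP_from_kadets:
  fixes \<sigma> :: real
  assumes "kadets_dist TYPE('a::banach) TYPE('b::banach) < \<sigma>" and s1: "\<sigma> < 1"
  shows "\<exists>N :: 'a \<times> 'b \<Rightarrow> real. compatible_seminorm N \<and> AP N (2 * \<sigma>)"
proof -
  let ?S = "{ball_hausdorff N | N :: 'a \<times> 'b \<Rightarrow> real. compatible_seminorm N}"
  define N0 :: "'a \<times> 'b \<Rightarrow> real" where "N0 = (\<lambda>(x, y). norm x + norm y)"
  have "compatible_seminorm N0"
    unfolding compatible_seminorm_def N0_def
    by (auto simp: scaleR_prod_def algebra_simps intro: add_mono[OF norm_triangle_ineq norm_triangle_ineq, simplified add.assoc])
  then have ne: "?S \<noteq> {}" by blast
  have bh_nonneg: "ball_hausdorff N \<ge> 0" if cs: "compatible_seminorm N" for N :: "'a \<times> 'b \<Rightarrow> real"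
  proof -
    have "(INF y\<in>cball (0::'b) 1. N (0, - y)) \<ge> 0"
      by (rule cINF_greatest) (auto simp: csN(1)[OF cs])
    moreover have "(SUP x\<in>cball (0::'a) 1. INF y\<in>cball (0::'b) 1. N (x, - y)) \<ge> (INF y\<in>cball (0::'b) 1. N (0, - y))"
    proof (rule cSUP_upper2[of _ _ 0])
      show "bdd_above ((\<lambda>x. INF y\<in>cball (0::'b) 1. N (x, - y)) ` cball 0 1)"
      proof (rule bdd_aboveI2)
        fix x :: 'a assume x: "x \<in> cball 0 1"
        have "(INF y\<in>cball (0::'b) 1. N (x, - y)) \<le> N (x, - 0)"
          by (rule cINF_lower) (auto intro!: bdd_belowI2[where m=0] simp: csN(1)[OF cs])
        then show "(INF y\<in>cball (0::'b) 1. N (x, - y)) \<le> 1" using x csN(4)[OF cs, of x] by simp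
      qed
    qed auto
    ultimately show ?thesis unfolding ball_hausdorff_def by linarith
  qed
  have "Inf ?S < \<sigma>" using assms unfolding kadets_dist_def by simp
  then obtain N :: "'a \<times> 'b \<Rightarrow> real" where cs: "compatible_seminorm N" and lt: "ball_hausdorff N < \<sigma>"
    using cInf_lessD[OF ne] by blast
  have infs: "\<exists>y\<in>cball (0::'b) 1. N (x, - y) < \<sigma>" if x: "x \<in> cball (0::'a) 1" for x
  proof -
    have bdd: "bdd_above ((\<lambda>x. INF y\<in>cball (0::'b) 1. N (x, - y)) ` cball 0 1)"
    proof (rule bdd_aboveI2)
      fix x :: 'a assume x: "x \<in> cball 0 1"
      have "(INF y\<in>cball (0::'b) 1. N (x, - y)) \<le> N (x, - 0)"
        by (rule cINF_lower) (auto intro!: bdd_belowI2[where m=0] simp: csN(1)[OF cs])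
      then show "(INF y\<in>cball (0::'b) 1. N (x, - y)) \<le> 1" using x csN(4)[OF cs, of x] by simp
    qed
    have "(INF y\<in>cball (0::'b) 1. N (x, - y)) \<le> (SUP x\<in>cball (0::'a) 1. INF y\<in>cball (0::'b) 1. N (x, - y))"
      by (rule cSUP_upper[OF x bdd])
    also have "\<dots> < \<sigma>" using lt unfolding ball_hausdorff_def by simp
    finally have "(INF y\<in>cball (0::'b) 1. N (x, - y)) < \<sigma>" .
    then show ?thesis by (subst (asm) cINF_less_iff) (auto intro!: bdd_belowI2[where m=0] simp: csN(1)[OF cs])
  qed
  have infs2: "\<exists>x\<in>cball (0::'a) 1. N (x, - y) < \<sigma>" if y: "y \<in> cball (0::'b) 1" for y
  proof -
    have bdd: "bdd_above ((\<lambda>y. INF x\<in>cball (0::'a) 1. N (x, - y)) ` cball 0 1)"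
    proof (rule bdd_aboveI2)
      fix y :: 'b assume y: "y \<in> cball 0 1"
      have "(INF x\<in>cball (0::'a) 1. N (x, - y)) \<le> N (0, - y)"
        by (rule cINF_lower) (auto intro!: bdd_belowI2[where m=0] simp: csN(1)[OF cs])
      then show "(INF x\<in>cball (0::'a) 1. N (x, - y)) \<le> 1" using y csN(5)[OF cs, of "-y"] by simp
    qed
    have "(INF x\<in>cball (0::'a) 1. N (x, - y)) \<le> (SUP y\<in>cball (0::'b) 1. INF x\<in>cball (0::'a) 1. N (x, - y))"
      by (rule cSUP_upper[OF y bdd])
    also have "\<dots> < \<sigma>" using lt unfolding ball_hausdorff_def by simp
    finally have "(INF x\<in>cball (0::'a) 1. N (x, - y)) < \<sigma>" .
    then show ?thesis by (subst (asm) cINF_less_iff) (auto intro!: bdd_belowI2[where m=0] simp: csN(1)[OF cs])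
  qed
  have "AP N (2 * \<sigma>)"
    unfolding AP_def
  proof (intro conjI allI impI)
    fix x :: 'a assume x: "norm x = 1"
    then obtain y where y: "norm y \<le> 1" "N (x, - y) < \<sigma>" using infs[of x] by auto
    have "1 \<le> N (x, - y) + norm y"
      using N_tri2[OF cs, of x 0 "- y"] x csN(4)[OF cs, of x] by simp
    then have ny: "norm y > 0" "norm y \<ge> 1 - \<sigma>" using y s1 by auto
    define y' where "y' = y /\<^sub>R norm y"
    have "norm y' = 1" using ny unfolding y'_def by simp
    moreover have "N (x, - y') \<le> N (x, - y) + norm (- y' - - y)" by (rule N_tri2[OF cs])
    moreover have "norm (- y' - - y) = 1 - norm y"
    proof -
      have "- y' - - y = (norm y - 1) *\<^sub>R y'" using ny unfolding y'_def by (simp add: algebra_simps)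
      then show ?thesis using \<open>norm y' = 1\<close> y(1) by simp
    qed
    ultimately show "\<exists>y. norm y = 1 \<and> N (x, - y) \<le> 2 * \<sigma>" using y ny by (intro exI[of _ y']) auto
  next
    fix y :: 'b assume y: "norm y = 1"
    then obtain x where x: "norm x \<le> 1" "N (x, - y) < \<sigma>" using infs2[of y] by auto
    have "1 \<le> N (x, - y) + norm x"
      using N_tri1[OF cs, of 0 "- y" x] y csN(5)[OF cs, of "-y"] by simp
    then have nx: "norm x > 0" "norm x \<ge> 1 - \<sigma>" using x s1 by auto
    define x' where "x' = x /\<^sub>R norm x"
    have "norm x' = 1" using nx unfolding x'_def by simp
    moreover have "N (x', - y) \<le> N (x, - y) + norm (x' - x)" by (rule N_tri1[OF cs])
    moreover have "norm (x' - x) = 1 - norm x"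
    proof -
      have "x' - x = (1 - norm x) *\<^sub>R x'" using nx unfolding x'_def by (simp add: algebra_simps)
      then show ?thesis using \<open>norm x' = 1\<close> x(1) by simp
    qed
    ultimately show "\<exists>x. norm x = 1 \<and> N (x, - y) \<le> 2 * \<sigma>" using x nx by (intro exI[of _ x']) auto
  qed
  then show ?thesis using cs by blast
qed

lemma assemble:
  fixes N :: "'a::real_normed_vector \<times> 'b::real_normed_vector \<Rightarrow> real"
  assumes cs: "compatible_seminorm N" and bij: "bij_betw \<beta> (sphere (0::'a) 1) (sphere (0::'b) 1)"
    and cl: "\<forall>x\<in>sphere 0 1. N (x, - \<beta> x) \<le> C" and CK: "C \<le> K"
  shows "\<exists>\<Omega>::'a\<Rightarrow>'b. bij \<Omega> \<and> (\<forall>x. norm (\<Omega> x) = norm x) \<and>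
    (\<forall>xs. \<bar>norm (\<Sum>x\<leftarrow>xs. \<Omega> x) - norm (\<Sum>x\<leftarrow>xs. x)\<bar> \<le> K * (\<Sum>x\<leftarrow>xs. norm x))"
proof -
  define \<Omega> where "\<Omega> x = (if x = 0 then 0 else norm x *\<^sub>R \<beta> (x /\<^sub>R norm x))" for x
  have bmap: "norm (\<beta> u) = 1" if "norm u = 1" for u
    using bij_betwE[OF bij] that by auto
  have nO: "norm (\<Omega> x) = norm x" for x
    unfolding \<Omega>_def using bmap[of "x /\<^sub>R norm x"] by auto
  have NO: "N (x, - \<Omega> x) \<le> C * norm x" for x
  proof (cases "x = 0")
    case True
    then show ?thesis unfolding \<Omega>_def using csN(4)[OF cs, of 0] by simp
  next
    case False
    have eq: "(x, - \<Omega> x) = norm x *\<^sub>R (x /\<^sub>R norm x, - \<beta> (x /\<^sub>R norm x))"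
      using False unfolding \<Omega>_def by simp
    have "N (x, - \<Omega> x) = N (norm x *\<^sub>R (x /\<^sub>R norm x, - \<beta> (x /\<^sub>R norm x)))"
      by (simp only: eq)
    also have "\<dots> = norm x * N (x /\<^sub>R norm x, - \<beta> (x /\<^sub>R norm x))"
      by (rule trans[OF csN(3)[OF cs]]) simp
    finally have "N (x, - \<Omega> x) = norm x * N (x /\<^sub>R norm x, - \<beta> (x /\<^sub>R norm x))" .
    also have "\<dots> \<le> norm x * C" using cl False by (intro mult_left_mono) auto
    finally show ?thesis by (simp add: mult.commute)
  qed
  have "inj \<Omega>"
  proof (rule injI)
    fix x y assume eq: "\<Omega> x = \<Omega> y"
    then have nxy: "norm x = norm y" using nO by metis
    show "x = y"
    proof (cases "x = 0")
      case True then show ?thesis using nxy by simp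
    next
      case False
      then have "y \<noteq> 0" using nxy by auto
      then have "\<beta> (x /\<^sub>R norm x) = \<beta> (y /\<^sub>R norm y)"
        using eq False nxy unfolding \<Omega>_def by simp
      then have "x /\<^sub>R norm x = y /\<^sub>R norm y"
        using bij_betw_imp_inj_on[OF bij] False \<open>y \<noteq> 0\<close> by (auto dest: inj_onD)
      then show ?thesis using nxy False by (metis divideR_right norm_eq_zero)
    qed
  qed
  moreover have "surj \<Omega>"
  proof (rule surjI)
    fix y :: 'b
    show "\<Omega> (if y = 0 then 0 else norm y *\<^sub>R inv_into (sphere 0 1) \<beta> (y /\<^sub>R norm y)) = y"
    proof (cases "y = 0")
      case True then show ?thesis unfolding \<Omega>_def by simp
    next
      case False
      define u where "u = inv_into (sphere 0 1) \<beta> (y /\<^sub>R norm y)"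
      have yu: "y /\<^sub>R norm y \<in> sphere 0 1" using False by simp
      then have u: "u \<in> sphere 0 1" "\<beta> u = y /\<^sub>R norm y"
      proof -
        have img: "\<beta> ` sphere 0 1 = sphere 0 1" using bij by (simp add: bij_betw_def)
        have "y /\<^sub>R norm y \<in> \<beta> ` sphere 0 1" using yu img by simp
        then show "u \<in> sphere 0 1" "\<beta> u = y /\<^sub>R norm y"
          unfolding u_def by (rule inv_into_into, rule f_inv_into_f)
      qed
      then have "norm u = 1" by simp
      then have "u \<noteq> 0" by auto
      then have "\<Omega> (norm y *\<^sub>R u) = norm y *\<^sub>R \<beta> u" using False \<open>norm u = 1\<close> unfolding \<Omega>_def by simp
      then show ?thesis using False u unfolding u_def by simp
    qed
  qed
  moreover have "\<bar>norm (\<Sum>x\<leftarrow>xs. \<Omega> x) - norm (\<Sum>x\<leftarrow>xs. x)\<bar> \<le> K * (\<Sum>x\<leftarrow>xs. norm x)" for xs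
  proof -
    let ?a = "\<Sum>x\<leftarrow>xs. x" and ?b = "\<Sum>x\<leftarrow>xs. \<Omega> x"
    have sl: "(?a, - ?b) = (\<Sum>x\<leftarrow>xs. (x, - \<Omega> x))"
    proof (induction xs)
      case (Cons a xs)
      have "(a + sum_list xs, - \<Omega> a - sum_list (map \<Omega> xs)) = (a, - \<Omega> a) + (sum_list xs, - sum_list (map \<Omega> xs))"
        by simp
      then show ?case by (simp add: Cons.IH[symmetric])
    qed (simp add: zero_prod_def)
    have "N (?a, - ?b) \<le> (\<Sum>x\<leftarrow>xs. N (x, - \<Omega> x))"
      unfolding sl using N_sum_list[OF cs, of "map (\<lambda>x. (x, - \<Omega> x)) xs"] by (simp add: comp_def)
    also have "\<dots> \<le> (\<Sum>x\<leftarrow>xs. C * norm x)" by (rule sum_list_mono) (rule NO)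
    also have "\<dots> = C * (\<Sum>x\<leftarrow>xs. norm x)" by (simp add: sum_list_const_mult)
    also have "\<dots> \<le> K * (\<Sum>x\<leftarrow>xs. norm x)" using CK by (intro mult_right_mono) (auto intro!: sum_list_nonneg)
    finally have D: "N (?a, - ?b) \<le> K * (\<Sum>x\<leftarrow>xs. norm x)" .
    have 1: "norm ?a \<le> N (?a, - ?b) + norm ?b"
      using N_tri2[OF cs, of ?a 0 "- ?b"] csN(4)[OF cs, of ?a] by simp
    have 2: "norm ?b \<le> N (?a, - ?b) + norm ?a"
      using N_tri1[OF cs, of 0 "- ?b" ?a] csN(5)[OF cs, of "- ?b"] by simp
    show ?thesis using 1 2 D by linarith
  qed
  ultimately show ?thesis using nO unfolding bij_def by blast
qed

lemma line_unit:
  fixes e a b :: "'a::real_normed_vector"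
  assumes L: "\<forall>w. \<exists>t. w = t *\<^sub>R e" and a: "norm a = 1" and b: "norm b = 1"
  shows "b = a \<or> b = - a"
proof -
  obtain s where s: "a = s *\<^sub>R e" using L by blast
  obtain t where t: "b = t *\<^sub>R e" using L by blast
  have s0: "s \<noteq> 0" using a s by auto
  have ba: "b = (t / s) *\<^sub>R a" using s t s0 by simp
  then have "norm b = \<bar>t / s\<bar> * norm a" by simp
  then have "\<bar>t / s\<bar> = 1" using a b by (metis mult.right_neutral)
  then have "t / s = 1 \<or> t / s = -1" by linarith
  then show ?thesis using ba by auto
qed

lemma unit_exists_or_trivial:
  fixes z :: "'a::real_normed_vector"
  assumes "z \<noteq> 0" shows "\<exists>u::'a. norm u = 1"
  using assms by (intro exI[of _ "z /\<^sub>R norm z"]) simp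

lemma onedim_transfer:
  fixes N :: "'a::real_normed_vector \<times> 'b::real_normed_vector \<Rightarrow> real"
  assumes cs: "compatible_seminorm N" and ap: "AP N c" and c: "c < 1/2"
    and Y1: "\<exists>e::'b. \<forall>w. \<exists>t. w = t *\<^sub>R e"
  shows "\<exists>x0::'a. \<forall>z. \<exists>t. z = t *\<^sub>R x0"
proof (cases "\<exists>u::'a. norm u = 1")
  case False
  then have "\<forall>z::'a. z = 0" using unit_exists_or_trivial by blast
  then show ?thesis by (intro exI[of _ 0]) auto
next
  case True
  then obtain x0 :: 'a where x0: "norm x0 = 1" by blast
  obtain e :: 'b where e: "\<forall>w. \<exists>t. w = t *\<^sub>R e" using Y1 by blast
  have "\<forall>x::'a. \<exists>y::'b. norm x = 1 \<longrightarrow> norm y = 1 \<and> N (x, - y) \<le> c"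
    using ap unfolding AP_def by blast
  then obtain F where F0: "\<forall>x::'a. norm x = 1 \<longrightarrow> norm (F x) = 1 \<and> N (x, - F x) \<le> c"
    by (rule choice[THEN exE])
  then have F: "\<And>x::'a. norm x = 1 \<Longrightarrow> norm (F x) = 1 \<and> N (x, - F x) \<le> c" by blast
  have close: "norm (u - x0) \<le> 2 * c \<or> norm (u + x0) \<le> 2 * c" if u: "norm u = 1" for u
  proof -
    have Fu: "norm (F u) = 1" "N (u, - F u) \<le> c" using F u by auto
    have Fx: "norm (F x0) = 1" "N (x0, - F x0) \<le> c" using F x0 by auto
    from line_unit[OF e Fx(1) Fu(1)] show ?thesis
    proof
      assume eq: "F u = F x0"
      have "(u - x0, 0) = (u, - F u) + (- x0, F x0)" using eq by simp
      then have "N (u - x0, 0) \<le> N (u, - F u) + N (- x0, F x0)" using csN(2)[OF cs] by metis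
      also have "N (- x0, F x0) = N (x0, - F x0)" using N_neg_swap[OF cs, of x0 "F x0"] by simp
      finally show ?thesis using Fu Fx csN(4)[OF cs, of "u - x0"] by simp
    next
      assume eq: "F u = - F x0"
      have "(u + x0, 0) = (u, - F u) + (x0, - F x0)" using eq by simp
      then have "N (u + x0, 0) \<le> N (u, - F u) + N (x0, - F x0)" using csN(2)[OF cs] by metis
      then show ?thesis using Fu Fx csN(4)[OF cs, of "u + x0"] by simp
    qed
  qed
  show ?thesis
  proof (rule ccontr)
    assume "\<not> ?thesis"
    then obtain z where z: "\<forall>t. z \<noteq> t *\<^sub>R x0" by blast
    define p where "p t = (1 - 2 * t) *\<^sub>R x0 + (t * (1 - t)) *\<^sub>R z" for t :: real
    have pnz: "p t \<noteq> 0" if t: "t \<in> {0..1}" for t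
    proof
      assume p0: "p t = 0"
      show False
      proof (cases "t = 0 \<or> t = 1")
        case True
        then show ?thesis using p0 x0 unfolding p_def by auto
      next
        case False
        then have tt: "t * (1 - t) \<noteq> 0" using t by auto
        have "(t * (1 - t)) *\<^sub>R z = - ((1 - 2 * t) *\<^sub>R x0)"
          using p0 unfolding p_def by (metis neg_eq_iff_add_eq_0)
        moreover have "z = (1 / (t * (1 - t))) *\<^sub>R ((t * (1 - t)) *\<^sub>R z)" using tt by simp
        ultimately have "z = (1 / (t * (1 - t))) *\<^sub>R (- ((1 - 2 * t) *\<^sub>R x0))" by simp
        then have "z = (- ((1 / (t * (1 - t))) * (1 - 2 * t))) *\<^sub>R x0"
          by (simp only: scaleR_minus_right scaleR_scaleR scaleR_minus_left)
        then show False using z by blast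
      qed
    qed
    define g where "g t = norm (p t /\<^sub>R norm (p t) - x0)" for t
    have cont: "continuous_on {0..1} g"
      unfolding g_def p_def using pnz[unfolded p_def]
      by (intro continuous_intros) auto
    have g0: "g 0 = 0" unfolding g_def p_def using x0 by simp
    have m2: "- x0 - x0 = (-2::real) *\<^sub>R x0" by (simp add: scaleR_2 algebra_simps)
    have g1: "g 1 = 2" unfolding g_def p_def using x0 by (simp add: m2)
    obtain t where t: "t \<in> {0..1}" "g t = 1"
      using IVT'[of g 0 1 1] cont g0 g1 by auto
    define u where "u = p t /\<^sub>R norm (p t)"
    have nu: "norm u = 1" using pnz[OF t(1)] unfolding u_def by simp
    have d1: "norm (u - x0) = 1" using t(2) unfolding g_def u_def by simp
    have "norm (x0 + x0) \<le> norm (u + x0) + norm (u - x0)"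
      using norm_triangle_ineq4[of "u + x0" "u - x0"] by (simp add: algebra_simps)
    moreover have "norm (x0 + x0) = 2" using x0 by (simp add: scaleR_2[symmetric])
    ultimately have "norm (u + x0) \<ge> 1" using d1 by linarith
    then show False using close[OF nu] d1 c by linarith
  qed
qed

lemma onedim_beta:
  fixes N :: "'a::real_normed_vector \<times> 'b::real_normed_vector \<Rightarrow> real"
  assumes cs: "compatible_seminorm N" and ap: "AP N c"
    and X1: "\<exists>x0::'a. \<forall>z. \<exists>t. z = t *\<^sub>R x0"
    and Y1: "\<exists>e::'b. \<forall>w. \<exists>t. w = t *\<^sub>R e"
  shows "\<exists>\<beta>. bij_betw \<beta> (sphere (0::'a) 1) (sphere (0::'b) 1) \<and> (\<forall>x\<in>sphere 0 1. N (x, - \<beta> x) \<le> c)"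
proof (cases "sphere (0::'a) 1 = {}")
  case True
  have "sphere (0::'b) 1 = {}"
  proof (rule ccontr)
    assume "sphere (0::'b) 1 \<noteq> {}"
    then obtain y :: 'b where "norm y = 1" by auto
    then obtain x :: 'a where "norm x = 1" using ap unfolding AP_def by blast
    then show False using True by auto
  qed
  then show ?thesis using True by (intro exI[of _ "\<lambda>_. 0"]) (simp add: bij_betw_def)
next
  case False
  then obtain x1 :: 'a where x1: "norm x1 = 1" by auto
  then obtain y1 :: 'b where y1: "norm y1 = 1" "N (x1, - y1) \<le> c" using ap unfolding AP_def by blast
  obtain x0 :: 'a where L1: "\<forall>z. \<exists>t. z = t *\<^sub>R x0" using X1 by blast
  obtain e :: 'b where L2: "\<forall>z. \<exists>t. z = t *\<^sub>R e" using Y1 by blast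
  have SX: "sphere (0::'a) 1 = {x1, - x1}"
  proof
    show "sphere (0::'a) 1 \<subseteq> {x1, - x1}"
    proof
      fix x :: 'a assume "x \<in> sphere 0 1"
      then have "norm x = 1" by simp
      then show "x \<in> {x1, - x1}" using line_unit[OF L1 x1, of x] by blast
    qed
  qed (use x1 in auto)
  have SY: "sphere (0::'b) 1 = {y1, - y1}"
  proof
    show "sphere (0::'b) 1 \<subseteq> {y1, - y1}"
    proof
      fix x :: 'b assume "x \<in> sphere 0 1"
      then have "norm x = 1" by simp
      then show "x \<in> {y1, - y1}" using line_unit[OF L2 y1(1), of x] by blast
    qed
  qed (use y1 in auto)
  have x1n: "x1 \<noteq> - x1"
  proof
    assume "x1 = - x1"
    then have "x1 + x1 = 0" by (metis add.right_inverse)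
    then have "2 *\<^sub>R x1 = 0" by (simp add: scaleR_2)
    then show False using x1 by simp
  qed
  have y1n: "y1 \<noteq> - y1"
  proof
    assume "y1 = - y1"
    then have "y1 + y1 = 0" by (metis add.right_inverse)
    then have "2 *\<^sub>R y1 = 0" by (simp add: scaleR_2)
    then show False using y1 by simp
  qed
  define \<beta> where "\<beta> x = (if x = x1 then y1 else - y1)" for x
  have "bij_betw \<beta> {x1, - x1} {y1, - y1}"
    unfolding bij_betw_def \<beta>_def using x1n y1n by (auto simp: inj_on_def)
  moreover have "\<forall>x\<in>{x1, - x1}. N (x, - \<beta> x) \<le> c"
    using y1 x1n N_neg_swap[OF cs, of x1 y1] unfolding \<beta>_def by auto
  ultimately show ?thesis unfolding SX SY by (intro exI[of _ \<beta>] conjI)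
qed

lemma dist_line_pos:
  fixes e w :: "'b::real_normed_vector"
  assumes w: "\<forall>t. w \<noteq> t *\<^sub>R e" and e: "norm e = 1"
  obtains \<kappa> where "\<kappa> > 0" "\<forall>t. norm (w - t *\<^sub>R e) \<ge> \<kappa>"
proof -
  define T where "T = 2 * norm w + 1"
  define f where "f t = norm (w - t *\<^sub>R e)" for t
  have "continuous_on {-T..T} f" unfolding f_def by (intro continuous_intros)
  then obtain t0 where t0: "t0 \<in> {-T..T}" "\<forall>t\<in>{-T..T}. f t0 \<le> f t"
    using continuous_attains_inf[of "{-T..T}" f] T_def by auto
  have m: "f t0 > 0" using w unfolding f_def by (metis eq_iff_diff_eq_0 zero_less_norm_iff)
  have "norm (w - t *\<^sub>R e) \<ge> min (f t0) 1" for t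
  proof (cases "t \<in> {-T..T}")
    case True then show ?thesis using t0 unfolding f_def by force
  next
    case False
    then have "\<bar>t\<bar> \<ge> T" by auto
    moreover have "norm (t *\<^sub>R e) \<le> norm (w - t *\<^sub>R e) + norm w"
      using norm_triangle_ineq4[of w "w - t *\<^sub>R e"] by (simp add: algebra_simps)
    then have "\<bar>t\<bar> \<le> norm (w - t *\<^sub>R e) + norm w" using e by simp
    ultimately have "norm (w - t *\<^sub>R e) \<ge> 1" using norm_ge_zero[of w] unfolding T_def by linarith
    then show ?thesis by linarith
  qed
  moreover have "min (f t0) 1 > 0" using m by simp
  ultimately show thesis using that by blast
qed

lemma decode_sum:
  fixes \<phi> :: "'c \<Rightarrow> 'b::banach" and e :: 'b
  assumes bound: "\<forall>c\<in>D. norm (\<phi> c) \<le> 2"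
    and sep: "\<forall>c\<in>D. \<forall>c'\<in>D. c \<noteq> c' \<longrightarrow> (\<forall>t. norm (\<phi> c - \<phi> c' - t *\<^sub>R e) \<ge> \<delta>)"
    and \<delta>: "\<delta> > 0" and \<rho>: "\<rho> = \<delta> / 16" and \<delta>1: "\<delta> \<le> 1"
    and s: "\<forall>n. s n \<in> D" and s': "\<forall>n. s' n \<in> D"
    and eq: "(\<Sum>n. \<rho> ^ n *\<^sub>R \<phi> (s n)) - (\<Sum>n. \<rho> ^ n *\<^sub>R \<phi> (s' n)) = \<mu> *\<^sub>R e"
  shows "s = s'"
proof (rule ccontr)
  assume ne: "s \<noteq> s'"
  then have "\<exists>n. s n \<noteq> s' n" by auto
  define n where "n = (LEAST n. s n \<noteq> s' n)"
  have sn: "s n \<noteq> s' n" unfolding n_def using \<open>\<exists>n. s n \<noteq> s' n\<close> by (rule LeastI_ex)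
  have before: "s m = s' m" if "m < n" for m
    using not_less_Least[of m "\<lambda>n. s n \<noteq> s' n"] that unfolding n_def by blast
  have \<rho>pos: "\<rho> > 0" and \<rho>half: "\<rho> \<le> 1/2" using \<rho> \<delta> \<delta>1 by auto
  define d where "d m = \<rho> ^ m *\<^sub>R (\<phi> (s m) - \<phi> (s' m))" for m
  have dn: "norm (d m) \<le> 4 * \<rho> ^ m" for m
  proof -
    have "norm (\<phi> (s m) - \<phi> (s' m)) \<le> 4"
    proof -
      have "norm (\<phi> (s m)) \<le> 2" "norm (\<phi> (s' m)) \<le> 2" using bound s s' by auto
      then show ?thesis using norm_triangle_ineq4[of "\<phi> (s m)" "\<phi> (s' m)"] by linarith
    qed
    then show ?thesis unfolding d_def using \<rho>pos by (simp add: mult.commute mult_left_mono)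
  qed
  have sg: "summable (\<lambda>m. 4 * \<rho> ^ m)" using \<rho>pos \<rho>half by (intro summable_mult summable_geometric) auto
  have sumd: "summable d" by (rule summable_comparison_test'[OF sg dn])
  have s1: "summable (\<lambda>n. \<rho> ^ n *\<^sub>R \<phi> (s n))"
    by (rule summable_comparison_test'[of "\<lambda>m. 2 * \<rho> ^ m"])
       (use \<rho>pos \<rho>half bound s in \<open>auto intro!: summable_mult summable_geometric mult_left_mono simp: mult.commute\<close>)
  have s2: "summable (\<lambda>n. \<rho> ^ n *\<^sub>R \<phi> (s' n))"
    by (rule summable_comparison_test'[of "\<lambda>m. 2 * \<rho> ^ m"])
       (use \<rho>pos \<rho>half bound s' in \<open>auto intro!: summable_mult summable_geometric mult_left_mono simp: mult.commute\<close>)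
  have "suminf d = \<mu> *\<^sub>R e"
    unfolding d_def scaleR_diff_right using eq suminf_diff[OF s1 s2] by simp
  moreover have "suminf d = (\<Sum>m. d (m + Suc n)) + sum d {..<Suc n}"
    by (rule suminf_split_initial_segment[OF sumd])
  moreover have "sum d {..<Suc n} = d n"
    using before unfolding d_def by (simp add: sum.lessThan_Suc)
  ultimately have key: "d n - \<mu> *\<^sub>R e = - (\<Sum>m. d (m + Suc n))" by (simp add: algebra_simps)
  have "norm (\<Sum>m. d (m + Suc n)) \<le> (\<Sum>m. 4 * \<rho> ^ (m + Suc n))"
  proof (rule norm_suminf_le)
    show "norm (d (m + Suc n)) \<le> 4 * \<rho> ^ (m + Suc n)" for m by (rule dn)
    show "summable (\<lambda>m. 4 * \<rho> ^ (m + Suc n))" by (rule summable_ignore_initial_segment[OF sg])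
  qed
  also have "\<dots> = 4 * \<rho> ^ Suc n * (\<Sum>m. \<rho> ^ m)"
    by (subst suminf_mult[symmetric]) (use \<rho>pos \<rho>half in \<open>auto intro!: summable_geometric simp: power_add mult_ac\<close>)
  also have "\<dots> = 4 * \<rho> ^ Suc n / (1 - \<rho>)"
    using \<rho>pos \<rho>half by (simp add: suminf_geometric)
  also have "\<dots> \<le> 8 * \<rho> ^ Suc n"
    using \<rho>pos \<rho>half by (simp add: divide_simps)
  also have "\<dots> = \<rho> ^ n * (\<delta> / 2)" using \<rho> by simp
  also have "\<dots> < \<rho> ^ n * \<delta>" using \<rho>pos \<delta> by simp
  finally have up: "norm (d n - \<mu> *\<^sub>R e) < \<rho> ^ n * \<delta>" using key by simp
  have "d n - \<mu> *\<^sub>R e = \<rho> ^ n *\<^sub>R (\<phi> (s n) - \<phi> (s' n) - (\<mu> / \<rho> ^ n) *\<^sub>R e)"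
    unfolding d_def using \<rho>pos by (simp add: algebra_simps)
  then have "norm (d n - \<mu> *\<^sub>R e) = \<rho> ^ n * norm (\<phi> (s n) - \<phi> (s' n) - (\<mu> / \<rho> ^ n) *\<^sub>R e)"
    using \<rho>pos by simp
  also have "\<dots> \<ge> \<rho> ^ n * \<delta>"
    using sep s s' sn \<rho>pos by (intro mult_left_mono) auto
  finally show False using up by simp
qed

lemma ball_code:
  fixes e :: "'b::real_normed_vector"
  assumes e: "norm e = 1"
  obtains B and code :: "'b \<Rightarrow> nat \<Rightarrow> 'b \<times> int" where "B \<subseteq> cball (0::'b) 1"
    "\<forall>a\<in>B. \<forall>b\<in>B. a \<noteq> b \<longrightarrow> (\<forall>t. norm (a - b - t *\<^sub>R e) \<ge> 1/4)"
    "inj_on code (cball 0 1)" "\<forall>r\<in>cball 0 1. \<forall>n. code r n \<in> B \<times> {k::int. \<bar>k\<bar> \<le> 13}"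
proof -
  let ?R = "\<lambda>a b. \<forall>t. norm (a - b - t *\<^sub>R e) \<ge> (1/4::real)"
  have sym: "?R b a" if "?R a b" for a b
  proof
    fix t
    have "norm (b - a - t *\<^sub>R e) = norm (a - b - (- t) *\<^sub>R e)"
      by (metis minus_diff_eq norm_minus_cancel scaleR_minus_left diff_minus_eq_add add.commute diff_diff_eq2 diff_add_eq)
    then show "norm (b - a - t *\<^sub>R e) \<ge> 1/4" using spec[OF that, of "- t"] by simp
  qed
  obtain B where B: "B \<subseteq> cball (0::'b) 1" "\<forall>a\<in>B. \<forall>b\<in>B. a \<noteq> b \<longrightarrow> ?R a b"
    "\<forall>s\<in>cball 0 1. \<exists>a\<in>B. s = a \<or> \<not> ?R s a"
    using maximal_sep[of ?R "cball 0 1"] sym by blast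
  define D where "D = B \<times> {k::int. \<bar>k\<bar> \<le> 13}"
  define f where "f bk = fst bk + (real_of_int (snd bk) / 4) *\<^sub>R e" for bk :: "'b \<times> int"
  have digit: "\<exists>bk\<in>D. norm (r - f bk) < 1/2" if r: "r \<in> cball 0 1" for r
  proof -
    obtain b t where b: "b \<in> B" and t: "norm (r - b - t *\<^sub>R e) < 1/4"
    proof -
      obtain a where a: "a \<in> B" "r = a \<or> \<not> ?R r a" using B(3) r by blast
      show ?thesis
      proof (cases "r = a")
        case True then show ?thesis using that[of a 0] a by simp
      next
        case False then show ?thesis using that a by (auto simp: not_le)
      qed
    qed
    have nb: "norm b \<le> 1" using b B(1) by auto
    have nr: "norm r \<le> 1" using r by auto
    have "t *\<^sub>R e = (r - b) - (r - b - t *\<^sub>R e)" by simp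
    then have "norm (t *\<^sub>R e) \<le> norm (r - b) + norm (r - b - t *\<^sub>R e)" by (metis norm_triangle_ineq4)
    also have "norm (r - b) \<le> norm r + norm b" by (rule norm_triangle_ineq4)
    finally have tb: "\<bar>t\<bar> \<le> 9/4" using nb nr t e by simp
    define k where "k = \<lfloor>4 * t\<rfloor>"
    have k1: "real_of_int k \<le> 4 * t" "4 * t < real_of_int k + 1" unfolding k_def by linarith+
    then have kb: "\<bar>k\<bar> \<le> 13" using tb by linarith
    have eq: "r - f (b, k) = (r - b - t *\<^sub>R e) + (t - real_of_int k / 4) *\<^sub>R e"
      unfolding f_def by (simp add: algebra_simps)
    have "norm (r - f (b, k)) \<le> norm (r - b - t *\<^sub>R e) + norm ((t - real_of_int k / 4) *\<^sub>R e)"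
      unfolding eq by (rule norm_triangle_ineq)
    then have "norm (r - f (b, k)) \<le> norm (r - b - t *\<^sub>R e) + \<bar>t - real_of_int k / 4\<bar>"
      using e by simp
    also have "\<bar>t - real_of_int k / 4\<bar> < 1/4" using k1 by linarith
    finally have "norm (r - f (b, k)) < 1/2" using t by linarith
    then show ?thesis using b kb unfolding D_def by (intro bexI[of _ "(b, k)"]) auto
  qed
  define dig where "dig r = (SOME bk. bk \<in> D \<and> norm (r - f bk) < 1/2)" for r
  have dig: "dig r \<in> D" "norm (r - f (dig r)) < 1/2" if "r \<in> cball 0 1" for r
    using someI_ex[OF digit[OF that, unfolded Bex_def]] unfolding dig_def by auto
  define res where "res r = 2 *\<^sub>R (r - f (dig r))" for r
  have res: "res r \<in> cball 0 1" if "r \<in> cball 0 1" for r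
    using dig(2)[OF that] unfolding res_def by simp
  define rs where "rs r n = (res ^^ n) r" for r n
  have rs_in: "rs r n \<in> cball 0 1" if "r \<in> cball 0 1" for r n
    unfolding rs_def by (induction n) (use that res in auto)
  define code where "code r n = dig (rs r n)" for r n
  have "inj_on code (cball 0 1)"
  proof (rule inj_onI)
    fix r r' assume r: "r \<in> cball (0::'b) 1" and r': "r' \<in> cball (0::'b) 1" and eq: "code r = code r'"
    have diff: "rs r n - rs r' n = (2 ^ n) *\<^sub>R (r - r')" for n
    proof (induction n)
      case 0 then show ?case unfolding rs_def by simp
    next
      case (Suc n)
      have "dig (rs r n) = dig (rs r' n)" using eq unfolding code_def by metis
      then have "rs r (Suc n) - rs r' (Suc n) = 2 *\<^sub>R (rs r n - rs r' n)"
        unfolding rs_def res_def by (simp add: algebra_simps)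
      then show ?case using Suc by simp
    qed
    have bnd: "2 ^ n * norm (r - r') \<le> 2" for n
    proof -
      have "2 ^ n * norm (r - r') = norm (rs r n - rs r' n)" using diff[of n] by simp
      also have "\<dots> \<le> norm (rs r n) + norm (rs r' n)" by (rule norm_triangle_ineq4)
      also have "\<dots> \<le> 2" using rs_in[OF r, of n] rs_in[OF r', of n] by simp
      finally show ?thesis .
    qed
    show "r = r'"
    proof (rule ccontr)
      assume "r \<noteq> r'"
      then have pos: "norm (r - r') > 0" by simp
      obtain n where "2 / norm (r - r') < 2 ^ n" using real_arch_pow[of 2 "2 / norm (r - r')"] by auto
      then have "2 < 2 ^ n * norm (r - r')" using pos by (simp add: divide_less_eq)
      then show False using bnd[of n] by linarith
    qed
  qed
  moreover have "\<forall>r\<in>cball 0 1. \<forall>n. code r n \<in> D"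
  proof (intro ballI allI)
    fix r :: 'b and n assume "r \<in> cball 0 1"
    then show "code r n \<in> D" unfolding code_def by (intro dig(1) rs_in)
  qed
  ultimately have i1: "inj_on code (cball 0 1)" and i2: "\<forall>r\<in>cball 0 1. \<forall>n. code r n \<in> B \<times> {k. \<bar>k\<bar> \<le> 13}"
    unfolding D_def by blast+
  show thesis by (rule that[OF B(1) B(2) i1 i2])
qed

lemma ivt_sphere:
  fixes e u :: "'b::real_normed_vector"
  assumes e: "norm e = 1" and \<eta>: "0 < \<eta>" "\<eta> < 1" and u: "norm u \<le> \<eta>"
  shows "\<exists>t. \<bar>t\<bar> \<le> \<eta> \<and> norm ((1 + t) *\<^sub>R e + u) = 1"
proof -
  define g where "g t = norm ((1 + t) *\<^sub>R e + u)" for t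
  have cont: "continuous_on {-\<eta>..\<eta>} g" unfolding g_def by (intro continuous_intros)
  have "g (-\<eta>) \<le> norm ((1 - \<eta>) *\<^sub>R e) + norm u" unfolding g_def
    using norm_triangle_ineq[of "(1 - \<eta>) *\<^sub>R e" u] by simp
  then have g1: "g (-\<eta>) \<le> 1" using e \<eta> u by simp
  have "norm ((1 + \<eta>) *\<^sub>R e) \<le> g \<eta> + norm u"
    using norm_triangle_ineq4[of "(1 + \<eta>) *\<^sub>R e + u" u] unfolding g_def by simp
  then have g2: "g \<eta> \<ge> 1" using e \<eta> u by simp
  obtain t where "t \<in> {-\<eta>..\<eta>}" "g t = 1" using IVT'[of g "-\<eta>" 1 \<eta>] cont g1 g2 \<eta> by auto
  then show ?thesis unfolding g_def by (intro exI[of _ t]) auto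
qed

lemma squash_inj: "inj (\<lambda>y::'b::real_normed_vector. y /\<^sub>R (1 + norm y))"
proof (rule injI)
  fix x y :: 'b
  assume eq: "x /\<^sub>R (1 + norm x) = y /\<^sub>R (1 + norm y)"
  have px: "1 + norm x > 0" and py: "1 + norm y > 0" by (simp_all add: add_pos_nonneg)
  have "norm x / (1 + norm x) = norm y / (1 + norm y)"
    using arg_cong[OF eq, of norm] px py by (simp add: divide_inverse_commute)
  then have "norm x * (1 + norm y) = norm y * (1 + norm x)" using px py by (simp add: divide_simps)
  then have n: "norm x = norm y" by (simp add: algebra_simps)
  then show "x = y" using eq py by simp
qed

lemma squash_ball: "(y::'b::real_normed_vector) /\<^sub>R (1 + norm y) \<in> cball 0 1"
proof -
  have "norm y / (1 + norm y) \<le> 1" by (simp add: divide_simps add_pos_nonneg)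
  then show ?thesis by (simp add: add_pos_nonneg divide_inverse_commute)
qed

lemma patch_inj:
  fixes e :: "'b::banach"
  assumes e: "norm e = 1" and w: "\<forall>t. w \<noteq> t *\<^sub>R e" and eps: "\<epsilon> > 0"
  shows "\<exists>j :: (nat \<Rightarrow> 'b) \<Rightarrow> 'b. inj j \<and> (\<forall>S. norm (j S) = 1 \<and> norm (j S - e) \<le> \<epsilon>)"
proof -
  obtain \<kappa> where \<kappa>0: "\<kappa> > 0" "\<forall>t. norm (w - t *\<^sub>R e) \<ge> \<kappa>"
    by (rule dist_line_pos[OF w e]) blast
  have \<kappa>: "\<kappa> > 0" "\<And>t. norm (w - t *\<^sub>R e) \<ge> \<kappa>" using \<kappa>0 by auto
  obtain B and code :: "'b \<Rightarrow> nat \<Rightarrow> 'b \<times> int" where B: "B \<subseteq> cball (0::'b) 1"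
    "\<forall>a\<in>B. \<forall>b\<in>B. a \<noteq> b \<longrightarrow> (\<forall>t. norm (a - b - t *\<^sub>R e) \<ge> 1/4)"
    and code: "inj_on code (cball 0 1)" "\<forall>r\<in>cball 0 1. \<forall>n. code r n \<in> B \<times> {k::int. \<bar>k\<bar> \<le> 13}"
    by (rule ball_code[OF e]) blast
  define D where "D = B \<times> {k::int. \<bar>k\<bar> \<le> 13}"
  define W where "W = norm w"
  define \<alpha> where "\<alpha> = 1 / (208 * (W + 1))"
  have W0: "W \<ge> 0" unfolding W_def by simp
  have \<alpha>0: "\<alpha> > 0" unfolding \<alpha>_def using W0 by simp
  have \<alpha>W: "\<alpha> * W \<le> 1 / 208" unfolding \<alpha>_def using W0 by (simp add: divide_simps)
  define \<phi> where "\<phi> bk = fst bk + (real_of_int (snd bk) * \<alpha>) *\<^sub>R w" for bk :: "'b \<times> int"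
  have bound: "\<forall>c\<in>D. norm (\<phi> c) \<le> 2"
  proof
    fix c assume c: "c \<in> D"
    obtain b k where bk: "c = (b, k)" by (cases c) simp
    have b: "norm b \<le> 1" and k: "\<bar>k\<bar> \<le> 13" using c B(1) unfolding bk D_def by auto
    have "norm (\<phi> c) \<le> norm b + \<bar>real_of_int k\<bar> * \<alpha> * W"
      unfolding bk \<phi>_def W_def using norm_triangle_ineq[of b "(real_of_int k * \<alpha>) *\<^sub>R w"] \<alpha>0
      by (simp add: abs_mult)
    also have "\<bar>real_of_int k\<bar> * \<alpha> * W \<le> 13 * (1/208)"
    proof -
      have k13: "\<bar>real_of_int k\<bar> \<le> 13" using k by linarith
      have "\<bar>real_of_int k\<bar> * (\<alpha> * W) \<le> 13 * (1/208)"
        using k13 \<alpha>W \<alpha>0 W0 by (intro mult_mono) auto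
      then show ?thesis by (simp add: mult.assoc)
    qed
    finally show "norm (\<phi> c) \<le> 2" using b by simp
  qed
  define \<delta> where "\<delta> = min (1/8) (\<alpha> * \<kappa>)"
  have \<delta>0: "\<delta> > 0" and \<delta>1: "\<delta> \<le> 1" unfolding \<delta>_def using \<alpha>0 \<kappa> by auto
  have sep: "\<forall>c\<in>D. \<forall>c'\<in>D. c \<noteq> c' \<longrightarrow> (\<forall>t. norm (\<phi> c - \<phi> c' - t *\<^sub>R e) \<ge> \<delta>)"
  proof (intro ballI impI allI)
    fix c c' t assume c: "c \<in> D" and c': "c' \<in> D" and cc: "c \<noteq> c'"
    obtain b k where bk: "c = (b, k)" by (cases c) simp
    obtain b' k' where bk': "c' = (b', k')" by (cases c') simp
    have b: "b \<in> B" and k: "\<bar>k\<bar> \<le> 13" using c unfolding bk D_def by auto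
    have b': "b' \<in> B" and k': "\<bar>k'\<bar> \<le> 13" using c' unfolding bk' D_def by auto
    have eq: "\<phi> c - \<phi> c' - t *\<^sub>R e = (b - b' - t *\<^sub>R e) + (real_of_int (k - k') * \<alpha>) *\<^sub>R w"
      unfolding bk bk' \<phi>_def by (simp add: algebra_simps)
    show "norm (\<phi> c - \<phi> c' - t *\<^sub>R e) \<ge> \<delta>"
    proof (cases "b = b'")
      case True
      then have kk: "k \<noteq> k'" using cc unfolding bk bk' by simp
      then have kk1: "\<bar>real_of_int (k - k')\<bar> \<ge> 1" by linarith
      define q where "q = real_of_int (k - k') * \<alpha>"
      have q0: "q \<noteq> 0" unfolding q_def using kk \<alpha>0 by simp
      have "\<phi> c - \<phi> c' - t *\<^sub>R e = q *\<^sub>R (w - (t / q) *\<^sub>R e)"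
        using eq True q0 unfolding q_def[symmetric] by (simp add: algebra_simps)
      then have "norm (\<phi> c - \<phi> c' - t *\<^sub>R e) = \<bar>q\<bar> * norm (w - (t / q) *\<^sub>R e)" by simp
      also have "\<dots> \<ge> \<alpha> * \<kappa>"
      proof (rule mult_mono)
        show "\<alpha> \<le> \<bar>q\<bar>" unfolding q_def using kk1 \<alpha>0 by (simp add: abs_mult)
      qed (use \<kappa> \<alpha>0 in auto)
      finally show ?thesis unfolding \<delta>_def by linarith
    next
      case False
      then have s1: "norm (b - b' - t *\<^sub>R e) \<ge> 1/4" using B(2) b b' by blast
      have "\<bar>real_of_int (k - k')\<bar> \<le> 26" using k k' by linarith
      then have "\<bar>real_of_int (k - k')\<bar> * (\<alpha> * W) \<le> 26 * (1/208)"
        using \<alpha>W \<alpha>0 W0 by (intro mult_mono) auto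
      then have s2: "norm ((real_of_int (k - k') * \<alpha>) *\<^sub>R w) \<le> 1/8"
        unfolding W_def using \<alpha>0 by (simp add: abs_mult mult.assoc)
      have "norm (b - b' - t *\<^sub>R e) \<le> norm (\<phi> c - \<phi> c' - t *\<^sub>R e) + norm ((real_of_int (k - k') * \<alpha>) *\<^sub>R w)"
        using norm_triangle_ineq4[of "\<phi> c - \<phi> c' - t *\<^sub>R e" "(real_of_int (k - k') * \<alpha>) *\<^sub>R w"]
        unfolding eq by simp
      then show ?thesis using s1 s2 unfolding \<delta>_def by linarith
    qed
  qed
  define \<rho> where "\<rho> = \<delta> / 16"
  have \<rho>0: "\<rho> > 0" and \<rho>h: "\<rho> \<le> 1/2" unfolding \<rho>_def using \<delta>0 \<delta>1 by auto
  define V where "V s = (\<Sum>n. \<rho> ^ n *\<^sub>R \<phi> (s n))" for s :: "nat \<Rightarrow> 'b \<times> int"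
  have Vb: "norm (V s) \<le> 4" if s: "\<forall>n. s n \<in> D" for s
  proof -
    have "norm (V s) \<le> (\<Sum>n. 2 * \<rho> ^ n)"
      unfolding V_def
    proof (rule norm_suminf_le)
      show "norm (\<rho> ^ n *\<^sub>R \<phi> (s n)) \<le> 2 * \<rho> ^ n" for n
        using bound s \<rho>0 by (simp add: mult.commute mult_left_mono)
      show "summable (\<lambda>n. 2 * \<rho> ^ n)" using \<rho>0 \<rho>h by (intro summable_mult summable_geometric) auto
    qed
    also have "\<dots> = 2 / (1 - \<rho>)" using \<rho>0 \<rho>h by (simp add: suminf_mult suminf_geometric)
    also have "\<dots> \<le> 4" using \<rho>0 \<rho>h by (simp add: divide_simps)
    finally show ?thesis .
  qed
  have dec: "s = s'" if "\<forall>n. s n \<in> D" "\<forall>n. s' n \<in> D" "V s - V s' = \<mu> *\<^sub>R e" for s s' \<mu>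
    by (rule decode_sum[OF bound sep \<delta>0 \<rho>_def \<delta>1 that(1,2), where \<mu>=\<mu>]) (use that(3) in \<open>simp add: V_def\<close>)
  define sq where "sq y = y /\<^sub>R (1 + norm y)" for y :: 'b
  define j0 where "j0 S m = (case prod_decode m of (i, l) \<Rightarrow> code (sq (S i)) l)" for S :: "nat \<Rightarrow> 'b" and m
  have j0D: "\<forall>m. j0 S m \<in> D" for S
  proof
    fix m
    obtain i l where il: "prod_decode m = (i, l)" by (cases "prod_decode m") simp
    show "j0 S m \<in> D" unfolding j0_def il D_def using code(2) squash_ball[of "S i"] unfolding sq_def by auto
  qed
  have j0inj: "S = S'" if eq: "j0 S = j0 S'" for S S'
  proof
    fix i
    have "code (sq (S i)) l = code (sq (S' i)) l" for l
      using fun_cong[OF eq, of "prod_encode (i, l)"] unfolding j0_def by simp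
    then have "code (sq (S i)) = code (sq (S' i))" by blast
    then have "sq (S i) = sq (S' i)"
      using code(1) squash_ball[of "S i"] squash_ball[of "S' i"] unfolding sq_def by (auto dest: inj_onD)
    then show "S i = S' i" using squash_inj unfolding sq_def by (auto dest: injD)
  qed
  define \<eta> where "\<eta> = min (\<epsilon> / 2) (1/4)"
  have \<eta>0: "\<eta> > 0" "\<eta> < 1" unfolding \<eta>_def using eps by auto
  define \<beta> where "\<beta> = \<eta> / 4"
  define u where "u S = \<beta> *\<^sub>R V (j0 S)" for S
  have ub: "norm (u S) \<le> \<eta>" for S
  proof -
    have "norm (u S) = \<beta> * norm (V (j0 S))" unfolding u_def \<beta>_def using \<eta>0 by simp
    also have "\<dots> \<le> \<beta> * 4" using Vb[OF j0D[of S]] \<eta>0 unfolding \<beta>_def by (intro mult_left_mono) auto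
    finally show ?thesis unfolding \<beta>_def by simp
  qed
  define tt where "tt S = (SOME t. \<bar>t\<bar> \<le> \<eta> \<and> norm ((1 + t) *\<^sub>R e + u S) = 1)" for S
  have tt: "\<bar>tt S\<bar> \<le> \<eta>" "norm ((1 + tt S) *\<^sub>R e + u S) = 1" for S
    using someI_ex[OF ivt_sphere[OF e \<eta>0 ub[of S]]] unfolding tt_def by auto
  define j where "j S = (1 + tt S) *\<^sub>R e + u S" for S
  have "inj j"
  proof (rule injI)
    fix S S' assume eq: "j S = j S'"
    then have "u S - u S' = (tt S' - tt S) *\<^sub>R e" unfolding j_def by (simp add: algebra_simps)
    then have "\<beta> *\<^sub>R (V (j0 S) - V (j0 S')) = (tt S' - tt S) *\<^sub>R e" unfolding u_def by (simp add: algebra_simps)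
    moreover have b0: "\<beta> \<noteq> 0" using \<eta>0 unfolding \<beta>_def by simp
    ultimately have "(1 / \<beta>) *\<^sub>R (\<beta> *\<^sub>R (V (j0 S) - V (j0 S'))) = (1 / \<beta>) *\<^sub>R ((tt S' - tt S) *\<^sub>R e)"
      by simp
    then have "V (j0 S) - V (j0 S') = ((tt S' - tt S) / \<beta>) *\<^sub>R e"
      using b0 by simp
    then have "j0 S = j0 S'" by (rule dec[OF j0D j0D])
    then show "S = S'" by (rule j0inj)
  qed
  moreover have "norm (j S) = 1 \<and> norm (j S - e) \<le> \<epsilon>" for S
  proof
    show "norm (j S) = 1" unfolding j_def by (rule tt(2))
    have "j S - e = tt S *\<^sub>R e + u S" unfolding j_def by (simp add: algebra_simps)
    then have "norm (j S - e) \<le> \<bar>tt S\<bar> + norm (u S)" using e norm_triangle_ineq[of "tt S *\<^sub>R e" "u S"] by simp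
    also have "\<dots> \<le> 2 * \<eta>" using tt(1)[of S] ub[of S] by simp
    also have "\<dots> \<le> \<epsilon>" unfolding \<eta>_def by simp
    finally show "norm (j S - e) \<le> \<epsilon>" .
  qed
  ultimately show ?thesis by (intro exI[of _ j] conjI allI) auto
qed

lemma homog_ext:
  fixes N :: "'a::real_normed_vector \<times> 'b::real_normed_vector \<Rightarrow> real"
  assumes cs: "compatible_seminorm N"
    and F: "\<forall>x::'a. norm x = 1 \<longrightarrow> norm (F x) = 1 \<and> N (x, - F x) \<le> c"
  defines "Ft \<equiv> \<lambda>x. if x = 0 then 0 else norm x *\<^sub>R F (x /\<^sub>R norm x)"
  shows "norm (Ft x) = norm x" "N (x, - Ft x) \<le> c * norm x"
proof -
  show "norm (Ft x) = norm x" unfolding Ft_def using F by auto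
  show "N (x, - Ft x) \<le> c * norm x"
  proof (cases "x = 0")
    case True
    then show ?thesis unfolding Ft_def using csN(4)[OF cs, of 0] by simp
  next
    case False
    have eq: "(x, - Ft x) = norm x *\<^sub>R (x /\<^sub>R norm x, - F (x /\<^sub>R norm x))"
      using False unfolding Ft_def by simp
    have "N (x, - Ft x) = N (norm x *\<^sub>R (x /\<^sub>R norm x, - F (x /\<^sub>R norm x)))"
      by (simp only: eq)
    also have "\<dots> = norm x * N (x /\<^sub>R norm x, - F (x /\<^sub>R norm x))"
      by (rule trans[OF csN(3)[OF cs]]) simp
    also have "\<dots> \<le> norm x * c" using F False by (intro mult_left_mono) auto
    finally show ?thesis by (simp add: mult.commute)
  qed
qed

lemma enc_inj:
  fixes N :: "'a::real_normed_vector \<times> 'b::real_normed_vector \<Rightarrow> real"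
  assumes cs: "compatible_seminorm N" and ap: "AP N c" and c: "0 \<le> c" "c < 1/2"
  shows "\<exists>enc :: 'a \<Rightarrow> nat \<Rightarrow> 'b. inj enc"
proof -
  have "\<forall>x::'a. \<exists>y::'b. norm x = 1 \<longrightarrow> norm y = 1 \<and> N (x, - y) \<le> c"
    using ap unfolding AP_def by blast
  then obtain F where F: "\<forall>x::'a. norm x = 1 \<longrightarrow> norm (F x) = 1 \<and> N (x, - F x) \<le> c"
    by (rule choice[THEN exE])
  have "\<forall>y::'b. \<exists>x::'a. norm y = 1 \<longrightarrow> norm x = 1 \<and> N (x, - y) \<le> c"
    using ap unfolding AP_def by blast
  then obtain G where G: "\<forall>y::'b. norm y = 1 \<longrightarrow> norm (G y) = 1 \<and> N (G y, - y) \<le> c"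
    by (rule choice[THEN exE])
  have G': "\<forall>y::'b. norm y = 1 \<longrightarrow> norm (G y) = 1 \<and> swapN N (y, - G y) \<le> c"
    using G N_neg_swap[OF cs] unfolding swapN_def by auto
  define Ft where "Ft = (\<lambda>x::'a. if x = 0 then 0 else norm x *\<^sub>R F (x /\<^sub>R norm x))"
  define Gt where "Gt = (\<lambda>y::'b. if y = 0 then 0 else norm y *\<^sub>R G (y /\<^sub>R norm y))"
  have Ft: "norm (Ft x) = norm x" "N (x, - Ft x) \<le> c * norm x" for x
    using homog_ext[OF cs F] unfolding Ft_def by auto
  have Gt0: "swapN N (y, - Gt y) \<le> c * norm y" for y
    using homog_ext[OF swapN_cs[OF cs] G'] unfolding Gt_def by auto
  have Gt: "N (Gt y, - y) \<le> c * norm y" for y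
    using Gt0[of y] N_neg_swap[OF cs, of "Gt y" y] unfolding swapN_def by simp
  define step where "step a = a - Gt (Ft a)" for a
  have stepb: "norm (step a) \<le> (2 * c) * norm a" for a
  proof -
    have "(step a, 0) = (a, - Ft a) + (- (Gt (Ft a), - Ft a))" unfolding step_def by simp
    then have "N (step a, 0) \<le> N (a, - Ft a) + N (- (Gt (Ft a), - Ft a))" using csN(2)[OF cs] by metis
    also have "N (- (Gt (Ft a), - Ft a)) = N (Gt (Ft a), - Ft a)" by (rule N_uminus[OF cs])
    finally show ?thesis using Ft[of a] Gt[of "Ft a"] csN(4)[OF cs, of "step a"] by simp
  qed
  define xs where "xs x n = (step ^^ n) x" for x n
  have xsb: "norm (xs x n) \<le> (2 * c) ^ n * norm x" for x n
  proof (induction n)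
    case 0 then show ?case unfolding xs_def by simp
  next
    case (Suc n)
    have "norm (xs x (Suc n)) \<le> (2 * c) * norm (xs x n)" unfolding xs_def using stepb by simp
    also have "\<dots> \<le> (2 * c) * ((2 * c) ^ n * norm x)" using Suc c by (intro mult_left_mono) auto
    finally show ?case by (simp add: mult.assoc)
  qed
  define enc where "enc x n = Ft (xs x n)" for x n
  have "inj enc"
  proof (rule injI)
    fix x x' assume eq: "enc x = enc x'"
    have d: "xs x n - xs x' n = x - x'" for n
    proof (induction n)
      case 0 then show ?case unfolding xs_def by simp
    next
      case (Suc n)
      have "Ft (xs x n) = Ft (xs x' n)" using eq unfolding enc_def by metis
      then show ?case using Suc unfolding xs_def step_def by (simp add: algebra_simps)
    qed
    have b: "norm (x - x') \<le> (2 * c) ^ n * (norm x + norm x')" for n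
    proof -
      have "norm (x - x') \<le> norm (xs x n) + norm (xs x' n)" using d[of n] norm_triangle_ineq4 by metis
      also have "\<dots> \<le> (2 * c) ^ n * norm x + (2 * c) ^ n * norm x'" using xsb by (intro add_mono)
      finally show ?thesis by (simp add: algebra_simps)
    qed
    show "x = x'"
    proof (rule ccontr)
      assume "x \<noteq> x'"
      then have pos: "norm (x - x') > 0" by simp
      have den: "norm x + norm x' + 1 > 0" using norm_ge_zero[of x] norm_ge_zero[of x'] by linarith
      have "0 < norm (x - x') / (norm x + norm x' + 1)" using pos den by (rule divide_pos_pos)
      then obtain n where n: "(2 * c) ^ n < norm (x - x') / (norm x + norm x' + 1)"
        using real_arch_pow_inv[of _ "2 * c"] c by auto
      have "(2 * c) ^ n * (norm x + norm x' + 1) < norm (x - x')"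
        using n den by (simp add: less_divide_eq)
      moreover have "(2 * c) ^ n * (norm x + norm x') \<le> (2 * c) ^ n * (norm x + norm x' + 1)"
        using c by (intro mult_left_mono) auto
      ultimately show False using b[of n] by linarith
    qed
  qed
  then show ?thesis by blast
qed

lemma inj_close:
  fixes N :: "'a::real_normed_vector \<times> 'b::banach \<Rightarrow> real"
  assumes cs: "compatible_seminorm N" and ap: "AP N c" and c: "0 \<le> c" "c < 1/2"
    and two: "\<forall>e::'b. \<exists>w. \<forall>t. w \<noteq> t *\<^sub>R e" and r: "r > 0"
  shows "\<exists>h::'a \<Rightarrow> 'b. inj_on h (sphere 0 1) \<and> h ` sphere 0 1 \<subseteq> sphere 0 1 \<and>
            (\<forall>x\<in>sphere 0 1. N (x, - h x) \<le> c + 2 * r)"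
proof -
  obtain enc :: "'a \<Rightarrow> nat \<Rightarrow> 'b" where enc: "inj enc" using enc_inj[OF cs ap c] by blast
  let ?R = "\<lambda>a b::'b. norm (a - b) \<ge> r"
  have sym: "?R b a" if "?R a b" for a b using that by (simp add: norm_minus_commute)
  obtain E0 where E0: "E0 \<subseteq> sphere (0::'b) 1" "\<forall>a\<in>E0. \<forall>b\<in>E0. a \<noteq> b \<longrightarrow> ?R a b"
    "\<forall>s\<in>sphere 0 1. \<exists>a\<in>E0. s = a \<or> \<not> ?R s a"
    using maximal_sep[of ?R "sphere (0::'b) 1"] sym by blast
  have Jex: "\<exists>j :: (nat \<Rightarrow> 'b) \<Rightarrow> 'b. inj j \<and> (\<forall>S. norm (j S) = 1 \<and> norm (j S - e) \<le> r / 3)"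
    if "e \<in> sphere 0 1" for e :: 'b
  proof -
    obtain w where w: "\<forall>t. w \<noteq> t *\<^sub>R e" using two by blast
    have ne: "norm e = 1" using that by simp
    have r3: "r / 3 > 0" using r by simp
    show ?thesis by (rule patch_inj[OF ne w r3])
  qed
  define J where "J e = (SOME j :: (nat \<Rightarrow> 'b) \<Rightarrow> 'b. inj j \<and> (\<forall>S. norm (j S) = 1 \<and> norm (j S - e) \<le> r / 3))" for e
  have J: "inj (J e)" "norm (J e S) = 1" "norm (J e S - e) \<le> r / 3" if "e \<in> sphere 0 1" for e S
    using someI_ex[OF Jex[OF that]] unfolding J_def by blast+
  have "\<forall>x::'a. \<exists>y::'b. norm x = 1 \<longrightarrow> norm y = 1 \<and> N (x, - y) \<le> c"
    using ap unfolding AP_def by blast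
  then obtain F where F: "\<forall>x::'a. norm x = 1 \<longrightarrow> norm (F x) = 1 \<and> N (x, - F x) \<le> c"
    by (rule choice[THEN exE])
  have pex: "\<exists>a. a \<in> E0 \<and> norm (F x - a) < r" if "norm x = 1" for x
  proof -
    have "F x \<in> sphere 0 1" using F that by simp
    then obtain a where a: "a \<in> E0" "F x = a \<or> \<not> ?R (F x) a" using E0(3) by blast
    then show ?thesis using r by (intro exI[of _ a]) auto
  qed
  define pick where "pick x = (SOME a. a \<in> E0 \<and> norm (F x - a) < r)" for x
  have pick: "pick x \<in> E0" "norm (F x - pick x) < r" if "norm x = 1" for x
    using someI_ex[OF pex[OF that]] unfolding pick_def by blast+
  have pickS: "pick x \<in> sphere 0 1" if "norm x = 1" for x using pick(1)[OF that] E0(1) by blast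
  define h where "h x = J (pick x) (enc x)" for x
  have "inj_on h (sphere 0 1)"
  proof (rule inj_onI)
    fix x x' assume x: "x \<in> sphere (0::'a) 1" and x': "x' \<in> sphere (0::'a) 1" and eq: "h x = h x'"
    have nx: "norm x = 1" "norm x' = 1" using x x' by auto
    have "norm (pick x - pick x') \<le> norm (J (pick x) (enc x) - pick x) + norm (J (pick x') (enc x') - pick x')"
    proof -
      have "pick x - pick x' = (J (pick x') (enc x') - pick x') - (J (pick x) (enc x) - pick x)"
        using eq unfolding h_def by simp
      then have "norm (pick x - pick x') \<le> norm (J (pick x') (enc x') - pick x') + norm (J (pick x) (enc x) - pick x)"
        by (metis norm_triangle_ineq4)
      then show ?thesis by simp
    qed
    also have "\<dots> \<le> r / 3 + r / 3" using J(3)[OF pickS[OF nx(1)]] J(3)[OF pickS[OF nx(2)]] by (intro add_mono)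
    finally have "norm (pick x - pick x') < r" using r by simp
    then have pp: "pick x = pick x'" using E0(2) pick(1)[OF nx(1)] pick(1)[OF nx(2)] by force
    then have "enc x = enc x'" using eq J(1)[OF pickS[OF nx(1)]] unfolding h_def by (auto dest: injD)
    then show "x = x'" using enc by (auto dest: injD)
  qed
  moreover have "h ` sphere 0 1 \<subseteq> sphere 0 1" using J(2) pickS unfolding h_def by auto
  moreover have "N (x, - h x) \<le> c + 2 * r" if x: "x \<in> sphere 0 1" for x
  proof -
    have nx: "norm x = 1" using x by simp
    have "N (x, - h x) \<le> N (x, - F x) + norm (- h x - - F x)" by (rule N_tri2[OF cs])
    also have "norm (- h x - - F x) \<le> norm (F x - pick x) + norm (h x - pick x)"
    proof -
      have "- h x - - F x = (F x - pick x) - (h x - pick x)" by simp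
      then show ?thesis by (metis norm_triangle_ineq4)
    qed
    also have "norm (h x - pick x) \<le> r / 3" unfolding h_def by (rule J(3)[OF pickS[OF nx]])
    finally have "N (x, - h x) \<le> N (x, - F x) + (norm (F x - pick x) + r / 3)" by simp
    moreover have "N (x, - F x) \<le> c" using F nx by blast
    ultimately show ?thesis using pick(2)[OF nx] r by linarith
  qed
  ultimately show ?thesis by (intro exI[of _ h] conjI ballI) auto
qed

lemma kadets_nonneg: "kadets_dist TYPE('a::real_normed_vector) TYPE('b::real_normed_vector) \<ge> 0"
proof -
  let ?S = "{ball_hausdorff N | N :: 'a \<times> 'b \<Rightarrow> real. compatible_seminorm N}"
  define N0 :: "'a \<times> 'b \<Rightarrow> real" where "N0 = (\<lambda>(x, y). norm x + norm y)"
  have "compatible_seminorm N0"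
    unfolding compatible_seminorm_def N0_def
    by (auto simp: scaleR_prod_def algebra_simps intro: add_mono[OF norm_triangle_ineq norm_triangle_ineq, simplified add.assoc])
  then have ne: "?S \<noteq> {}" by blast
  have bh_nonneg: "ball_hausdorff N \<ge> 0" if cs: "compatible_seminorm N" for N :: "'a \<times> 'b \<Rightarrow> real"
  proof -
    have "(INF y\<in>cball (0::'b) 1. N (0, - y)) \<ge> 0"
      by (rule cINF_greatest) (auto simp: csN(1)[OF cs])
    moreover have "(SUP x\<in>cball (0::'a) 1. INF y\<in>cball (0::'b) 1. N (x, - y)) \<ge> (INF y\<in>cball (0::'b) 1. N (0, - y))"
    proof (rule cSUP_upper2[of _ _ 0])
      show "bdd_above ((\<lambda>x. INF y\<in>cball (0::'b) 1. N (x, - y)) ` cball 0 1)"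
      proof (rule bdd_aboveI2)
        fix x :: 'a assume x: "x \<in> cball 0 1"
        have "(INF y\<in>cball (0::'b) 1. N (x, - y)) \<le> N (x, - 0)"
          by (rule cINF_lower) (auto intro!: bdd_belowI2[where m=0] simp: csN(1)[OF cs])
        then show "(INF y\<in>cball (0::'b) 1. N (x, - y)) \<le> 1" using x csN(4)[OF cs, of x] by simp
      qed
    qed auto
    ultimately show ?thesis unfolding ball_hausdorff_def by linarith
  qed
  have "Inf ?S \<ge> 0" by (rule cInf_greatest[OF ne]) (use bh_nonneg in blast)
  then show ?thesis unfolding kadets_dist_def by simp
qed

theorem theorem2p4:
  fixes \<sigma> :: real
  assumes "kadets_dist TYPE('a::banach) TYPE('b::banach) < \<sigma>"
      and "\<sigma> < 1/6"
  shows "\<exists>\<Omega> :: 'a \<Rightarrow> 'b. bij \<Omega> \<and> (\<forall>x. norm (\<Omega> x) = norm x) \<and>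
           (\<forall>xs :: 'a list. \<bar>norm (\<Sum>x\<leftarrow>xs. \<Omega> x) - norm (\<Sum>x\<leftarrow>xs. x)\<bar>
                 \<le> 14 * \<sigma> * (\<Sum>x\<leftarrow>xs. norm x))"
proof -
  have s1: "\<sigma> < 1" using assms(2) by simp
  obtain N :: "'a \<times> 'b \<Rightarrow> real" where cs: "compatible_seminorm N" and ap: "AP N (2 * \<sigma>)"
    using AP_from_kadets[OF assms(1) s1] by blast
  have k0: "kadets_dist TYPE('a) TYPE('b) \<ge> 0" by (rule kadets_nonneg)
  have \<sigma>0: "\<sigma> > 0" using k0 assms(1) by linarith
  have c: "0 \<le> 2 * \<sigma>" "2 * \<sigma> < 1/2" using \<sigma>0 assms(2) by auto
  have r: "\<sigma> / 2 > 0" using \<sigma>0 by simp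
  have ap': "AP (swapN N) (2 * \<sigma>)" by (rule swapN_AP[OF cs ap])
  have cs': "compatible_seminorm (swapN N)" by (rule swapN_cs[OF cs])
  have main: "\<exists>\<beta>. bij_betw \<beta> (sphere (0::'a) 1) (sphere (0::'b) 1) \<and> (\<forall>x\<in>sphere 0 1. N (x, - \<beta> x) \<le> 3 * \<sigma>)"
  proof (cases "(\<forall>e::'b. \<exists>w. \<forall>t. w \<noteq> t *\<^sub>R e) \<and> (\<forall>e::'a. \<exists>w. \<forall>t. w \<noteq> t *\<^sub>R e)")
    case True
    then have twoY: "\<forall>e::'b. \<exists>w. \<forall>t. w \<noteq> t *\<^sub>R e" and twoX: "\<forall>e::'a. \<exists>w. \<forall>t. w \<noteq> t *\<^sub>R e" by auto
    obtain f :: "'a \<Rightarrow> 'b" where f: "inj_on f (sphere 0 1)" "f ` sphere 0 1 \<subseteq> sphere 0 1"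
      "\<forall>x\<in>sphere 0 1. N (x, - f x) \<le> 2 * \<sigma> + 2 * (\<sigma> / 2)"
      using inj_close[OF cs ap c twoY r] by blast
    obtain g :: "'b \<Rightarrow> 'a" where g: "inj_on g (sphere 0 1)" "g ` sphere 0 1 \<subseteq> sphere 0 1"
      "\<forall>y\<in>sphere 0 1. swapN N (y, - g y) \<le> 2 * \<sigma> + 2 * (\<sigma> / 2)"
      using inj_close[OF cs' ap' c twoX r] by blast
    obtain \<beta> where \<beta>: "bij_betw \<beta> (sphere (0::'a) 1) (sphere (0::'b) 1)"
      "\<forall>a\<in>sphere 0 1. \<beta> a = f a \<or> (\<beta> a \<in> sphere 0 1 \<and> g (\<beta> a) = a)"
      using csb_strong[OF f(1) f(2) g(1) g(2)] by blast
    have "N (x, - \<beta> x) \<le> 3 * \<sigma>" if x: "x \<in> sphere 0 1" for x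
    proof (cases "\<beta> x = f x")
      case True then show ?thesis using f(3) x by simp
    next
      case False
      then have b: "\<beta> x \<in> sphere 0 1" "g (\<beta> x) = x" using \<beta>(2) x by auto
      have "swapN N (\<beta> x, - g (\<beta> x)) \<le> 3 * \<sigma>" using g(3) b(1) by simp
      then have "N (- x, \<beta> x) \<le> 3 * \<sigma>" using b(2) unfolding swapN_def by simp
      then show ?thesis using N_neg_swap[OF cs, of x "\<beta> x"] by simp
    qed
    then show ?thesis using \<beta>(1) by blast
  next
    case False
    then have one: "(\<exists>e::'b. \<forall>w. \<exists>t. w = t *\<^sub>R e) \<or> (\<exists>e::'a. \<forall>w. \<exists>t. w = t *\<^sub>R e)" by blast
    have X1: "\<exists>e::'a. \<forall>w. \<exists>t. w = t *\<^sub>R e" and Y1: "\<exists>e::'b. \<forall>w. \<exists>t. w = t *\<^sub>R e"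
    proof -
      have "(\<exists>e::'a. \<forall>w. \<exists>t. w = t *\<^sub>R e) \<and> (\<exists>e::'b. \<forall>w. \<exists>t. w = t *\<^sub>R e)"
      proof (cases "\<exists>e::'b. \<forall>w. \<exists>t. w = t *\<^sub>R e")
        case True
        then show ?thesis using onedim_transfer[OF cs ap c(2) True] by blast
      next
        case False
        then have X: "\<exists>e::'a. \<forall>w. \<exists>t. w = t *\<^sub>R e" using one by blast
        show ?thesis using onedim_transfer[OF cs' ap' c(2) X] X by blast
      qed
      then show "\<exists>e::'a. \<forall>w. \<exists>t. w = t *\<^sub>R e" "\<exists>e::'b. \<forall>w. \<exists>t. w = t *\<^sub>R e" by blast+
    qed
    obtain \<beta> where \<beta>: "bij_betw \<beta> (sphere (0::'a) 1) (sphere (0::'b) 1)"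
      "\<forall>x\<in>sphere 0 1. N (x, - \<beta> x) \<le> 2 * \<sigma>"
      using onedim_beta[OF cs ap X1 Y1] by blast
    have "\<forall>x\<in>sphere 0 1. N (x, - \<beta> x) \<le> 3 * \<sigma>" using \<beta>(2) \<sigma>0 by force
    then show ?thesis using \<beta>(1) by blast
  qed
  then obtain \<beta> where \<beta>: "bij_betw \<beta> (sphere (0::'a) 1) (sphere (0::'b) 1)"
      "\<forall>x\<in>sphere 0 1. N (x, - \<beta> x) \<le> 3 * \<sigma>" by blast
  have CK: "3 * \<sigma> \<le> 14 * \<sigma>" using \<sigma>0 by simp
  show ?thesis by (rule assemble[OF cs \<beta>(1) \<beta>(2) CK])
qed

end
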